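(* Let $m\ge 3$, $H=B(l_1,\ldots,l_m)$ and $G=H^2$. Then $G$ is equitably $(m+1)$-choosable.
   Context: All graphs are finite and simple. For $m,l_1,\ldots,l_m\in\mathbb{N}$ with $l_1\le\cdots\le l_m$, $B(l_1,\ldots,l_m)$ is the graph with vertex set $\{u\}\cup\{v_{i,j}: i\in[m], j\in[l_i]\}$ in which, for each $i\in[m]$, consecutive vertices in the sequence $u, v_{i,1},\ldots,v_{i,l_i}$ are adjacent (and there are no other edges). For a graph $H$, $H^2$ has vertex set $V(H)$ with two vertices adjacent iff their distance in $H$ is 1 or 2. A $k$-assignment $L$ assigns to each vertex a set of exactly $k$ colors; an equitable $L$-coloring of $G$ is a proper coloring $f$ with $f(v)\in L(v)$ such that no color is used more than $\lceil |V(G)|/k\rceil$ times; $G$ is equitably $k$-choosable if it has an equitable $L$-coloring for every $k$-assignment $L$. *)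

theory Defs
  imports Complex_Main
begin

text \<open>Simple graphs: a finite vertex set V and a symmetric irreflexive adjacency
relation E (only its restriction to V matters).\<close>

definition B_verts :: "nat \<Rightarrow> (nat \<Rightarrow> nat) \<Rightarrow> (nat \<times> nat) option set" where
  "B_verts m l = {None} \<union> {Some (i, j) | i j. 1 \<le> i \<and> i \<le> m \<and> 1 \<le> j \<and> j \<le> l i}"

text \<open>u is None, v_{i,j} is Some (i,j).\<close>
definition B_adj :: "nat \<Rightarrow> (nat \<Rightarrow> nat) \<Rightarrow> (nat \<times> nat) option \<Rightarrow> (nat \<times> nat) option \<Rightarrow> bool" where
  "B_adj m l x y \<longleftrightarrow> x \<in> B_verts m l \<and> y \<in> B_verts m l \<and>
     ((\<exists>i. (x = None \<and> y = Some (i, 1)) \<or> (y = None \<and> x = Some (i, 1))) \<or>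
      (\<exists>i j. (x = Some (i, j) \<and> y = Some (i, Suc j)) \<or> (y = Some (i, j) \<and> x = Some (i, Suc j))))"

definition square_adj :: "'a set \<Rightarrow> ('a \<Rightarrow> 'a \<Rightarrow> bool) \<Rightarrow> 'a \<Rightarrow> 'a \<Rightarrow> bool" where
  "square_adj V E x y \<longleftrightarrow> x \<in> V \<and> y \<in> V \<and> x \<noteq> y \<and>
     (E x y \<or> (\<exists>w\<in>V. E x w \<and> E w y))"

definition k_assignment :: "'a set \<Rightarrow> nat \<Rightarrow> ('a \<Rightarrow> nat set) \<Rightarrow> bool" where
  "k_assignment V k L \<longleftrightarrow> (\<forall>v\<in>V. finite (L v) \<and> card (L v) = k)"

definition equitable_L_coloring ::
  "'a set \<Rightarrow> ('a \<Rightarrow> 'a \<Rightarrow> bool) \<Rightarrow> nat \<Rightarrow> ('a \<Rightarrow> nat set) \<Rightarrow> ('a \<Rightarrow> nat) \<Rightarrow> bool" where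
  "equitable_L_coloring V E k L f \<longleftrightarrow>
     (\<forall>v\<in>V. f v \<in> L v) \<and>
     (\<forall>x\<in>V. \<forall>y\<in>V. E x y \<longrightarrow> f x \<noteq> f y) \<and>
     (\<forall>c. card {v\<in>V. f v = c} \<le> nat \<lceil>real (card V) / real k\<rceil>)"

definition equitably_choosable :: "'a set \<Rightarrow> ('a \<Rightarrow> 'a \<Rightarrow> bool) \<Rightarrow> nat \<Rightarrow> bool" where
  "equitably_choosable V E k \<longleftrightarrow>
     (\<forall>L. k_assignment V k L \<longrightarrow> (\<exists>f. equitable_L_coloring V E k L f))"

end

theory Submission
  imports Defs
begin

lemma ceil_nat:
  assumes "0 < k"
  shows "nat \<lceil>real a / real k\<rceil> = (a + k - 1) div k"
proof -
  define q where "q = (a + k - 1) div k"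
  have e: "q * k + (a + k - 1) mod k = a + k - 1" unfolding q_def by (rule div_mult_mod_eq)
  have r: "(a + k - 1) mod k < k" using assms by simp
  have h1: "q * k \<ge> a" using e r assms by linarith
  have h2: "q * k < a + k" using e r assms by linarith
  have "\<lceil>real a / real k\<rceil> = int q"
  proof (rule ceiling_unique)
    have "real a \<le> real q * real k" using h1 by (metis of_nat_le_iff of_nat_mult)
    then show "real a / real k \<le> of_int (int q)" using assms by (simp add: divide_le_eq)
    have "real q * real k < real a + real k" using h2 by (metis of_nat_add of_nat_less_iff of_nat_mult)
    then show "of_int (int q) - 1 < real a / real k" using assms by (simp add: field_simps)
  qed
  then show ?thesis unfolding q_def by simp
qed

lemma sdr:
  assumes "finite S" and "\<forall>x\<in>S. finite (A x)"
    and "\<forall>j. card {x\<in>S. card (A x) \<le> j} \<le> j"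
  shows "\<exists>g. inj_on g S \<and> (\<forall>x\<in>S. g x \<in> A x)"
  using assms
proof (induction "card S" arbitrary: S)
  case 0
  then show ?case by auto
next
  case (Suc n)
  then have ne: "S \<noteq> {}" by auto
  define M where "M = Max ((\<lambda>x. card (A x)) ` S)"
  have "M \<in> (\<lambda>x. card (A x)) ` S" unfolding M_def using Suc.prems ne by simp
  then obtain z where z: "z \<in> S" "card (A z) = M" by auto
  have zmax: "\<forall>x\<in>S. card (A x) \<le> card (A z)" unfolding z(2) M_def using Suc.prems by simp
  have "{x\<in>S. card (A x) \<le> card (A z)} = S" using zmax by auto
  then have cS: "card S \<le> card (A z)" using Suc.prems(3) by metis
  have n: "n = card (S - {z})" using Suc.hyps(2) z(1) by simp
  have "\<forall>j. card {x\<in>S - {z}. card (A x) \<le> j} \<le> j"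
  proof
    fix j
    have "card {x\<in>S - {z}. card (A x) \<le> j} \<le> card {x\<in>S. card (A x) \<le> j}"
      by (rule card_mono) (use Suc.prems in auto)
    then show "card {x\<in>S - {z}. card (A x) \<le> j} \<le> j" using Suc.prems(3) le_trans by blast
  qed
  then obtain g where g: "inj_on g (S - {z})" "\<forall>x\<in>S - {z}. g x \<in> A x"
    using Suc.hyps(1)[OF n] Suc.prems by auto
  have "\<not> A z \<subseteq> g ` (S - {z})"
  proof
    assume "A z \<subseteq> g ` (S - {z})"
    then have "card (A z) \<le> card (g ` (S - {z}))" by (rule card_mono[rotated]) (use Suc.prems in auto)
    also have "\<dots> \<le> n" using n card_image_le Suc.prems(1) by (metis finite_Diff)
    finally show False using cS Suc.hyps(2) by simp
  qed
  then obtain c where c: "c \<in> A z" "c \<notin> g ` (S - {z})" by auto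
  define g' where "g' = g(z := c)"
  have "inj_on g' (S - {z})" unfolding g'_def by (rule inj_on_fun_updI) (use g c in auto)
  moreover have "g' z \<notin> g' ` (S - {z})" using c unfolding g'_def by auto
  ultimately have "inj_on g' S" by (metis Diff_idemp inj_on_insert insert_Diff z(1))
  moreover have "\<forall>x\<in>S. g' x \<in> A x" using g c unfolding g'_def by auto
  ultimately show ?case by blast
qed

lemma ech_mono:
  assumes "equitably_choosable V E' k" "\<And>x y. x\<in>V \<Longrightarrow> y\<in>V \<Longrightarrow> E x y \<Longrightarrow> E' x y"
  shows "equitably_choosable V E k"
  unfolding equitably_choosable_def
proof (intro allI impI)
  fix L assume "k_assignment V k L"
  then obtain f where f: "equitable_L_coloring V E' k L f" using assms(1) unfolding equitably_choosable_def by blast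
  then have "equitable_L_coloring V E k L f" unfolding equitable_L_coloring_def using assms(2) by blast
  then show "\<exists>f. equitable_L_coloring V E k L f" by blast
qed

lemma kk_step:
  assumes fin: "finite V" and sub: "S \<subseteq> V" and k: "0 < k"
    and irr: "\<And>x. \<not> E x x" and sym: "\<And>x y. E x y \<Longrightarrow> E y x"
    and ch: "equitably_choosable (V - S) E k"
    and ce: "(card (V - S) + k - 1) div k + 1 \<le> (card V + k - 1) div k"
    and hall: "\<And>t. t \<le> k \<Longrightarrow> card {x\<in>S. t \<le> card {y\<in>V - S. E x y}} + t \<le> k"
  shows "equitably_choosable V E k"
  unfolding equitably_choosable_def
proof (intro allI impI)
  fix L assume L: "k_assignment V k L"
  then have "k_assignment (V - S) k L" unfolding k_assignment_def by auto
  then obtain f where f: "equitable_L_coloring (V - S) E k L f"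
    using ch unfolding equitably_choosable_def by blast
  have finS: "finite S" using fin sub finite_subset by blast
  define N where "N x = {y\<in>V - S. E x y}" for x
  define A where "A x = L x - f ` N x" for x
  have finN: "finite (N x)" for x unfolding N_def using fin by auto
  have cA: "card (A x) \<ge> k - card (N x)" if "x \<in> S" for x
  proof -
    have "card (L x) = k" using L that sub unfolding k_assignment_def by auto
    moreover have "card (L x) - card (f ` N x) \<le> card (A x)"
      unfolding A_def by (rule diff_card_le_card_Diff) (use finN in auto)
    moreover have "card (f ` N x) \<le> card (N x)" by (rule card_image_le) (rule finN)
    ultimately show ?thesis by linarith
  qed
  have "\<exists>g. inj_on g S \<and> (\<forall>x\<in>S. g x \<in> A x)"
  proof (rule sdr)
    show "finite S" by (rule finS)
    show "\<forall>x\<in>S. finite (A x)" unfolding A_def using L sub unfolding k_assignment_def by auto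
    show "\<forall>j. card {x \<in> S. card (A x) \<le> j} \<le> j"
    proof
      fix j
      show "card {x \<in> S. card (A x) \<le> j} \<le> j"
      proof (cases "k \<le> j")
        case True
        have "card {x \<in> S. card (A x) \<le> j} \<le> card S" by (rule card_mono) (use finS in auto)
        moreover have "card S \<le> k" using hall[of 0] by simp
        ultimately show ?thesis using True by linarith
      next
        case False
        have "card {x \<in> S. card (A x) \<le> j} \<le> card {x\<in>S. k - j \<le> card (N x)}"
          by (rule card_mono) (use finS cA in force)+
        also have "\<dots> + (k - j) \<le> k" using hall[of "k - j"] unfolding N_def by simp
        ultimately show ?thesis using False by linarith
      qed
    qed
  qed
  then obtain g where g: "inj_on g S" "\<forall>x\<in>S. g x \<in> A x" by blast
  define h where "h x = (if x \<in> S then g x else f x)" for x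
  have "equitable_L_coloring V E k L h"
    unfolding equitable_L_coloring_def
  proof (intro conjI ballI allI impI)
    fix v assume "v \<in> V"
    then show "h v \<in> L v" using f g unfolding h_def A_def equitable_L_coloring_def by auto
  next
    fix x y assume xy: "x \<in> V" "y \<in> V" "E x y"
    show "h x \<noteq> h y"
    proof (cases "x \<in> S")
      case xS: True
      show ?thesis
      proof (cases "y \<in> S")
        case True
        have "x \<noteq> y" using xy irr by metis
        then show ?thesis using g True xS unfolding h_def inj_on_def by auto
      next
        case False
        then have "y \<in> N x" unfolding N_def using xy by auto
        then show ?thesis using g xS False unfolding h_def A_def by auto
      qed
    next
      case xS: False
      show ?thesis
      proof (cases "y \<in> S")
        case True
        then have "x \<in> N y" unfolding N_def using xy xS sym by auto
        then have "f x \<noteq> g y" using g True unfolding A_def by (metis DiffE image_eqI)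
        then show ?thesis using xS True unfolding h_def by auto
      next
        case False
        then show ?thesis using f xS xy unfolding h_def equitable_L_coloring_def by auto
      qed
    qed
  next
    fix c
    have eq: "{v\<in>V. h v = c} = {v\<in>V - S. f v = c} \<union> {v\<in>S. g v = c}"
      unfolding h_def using sub by auto
    have c1: "card {v\<in>V - S. f v = c} \<le> (card (V - S) + k - 1) div k"
      using f ceil_nat[OF k, of "card (V - S)"] unfolding equitable_L_coloring_def by metis
    have c2: "card {v\<in>S. g v = c} \<le> 1"
    proof -
      have "finite {v\<in>S. g v = c}" using finS by auto
      moreover have "\<forall>x\<in>{v\<in>S. g v = c}. \<forall>y\<in>{v\<in>S. g v = c}. x = y"
        using g(1) unfolding inj_on_def by auto
      ultimately have "card {v\<in>S. g v = c} \<le> Suc 0" using card_le_Suc0_iff_eq by blast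
      then show ?thesis by simp
    qed
    have "card {v\<in>V. h v = c} \<le> card {v\<in>V - S. f v = c} + card {v\<in>S. g v = c}"
      unfolding eq by (rule card_Un_le)
    also have "\<dots> \<le> (card V + k - 1) div k" using c1 c2 ce by linarith
    finally show "card {v\<in>V. h v = c} \<le> nat \<lceil>real (card V) / real k\<rceil>"
      using ceil_nat[OF k, of "card V"] by simp
  qed
  then show "\<exists>f. equitable_L_coloring V E k L f" by blast
qed

lemma Some_in_B [simp]: "Some (i, j) \<in> B_verts m l \<longleftrightarrow> 1 \<le> i \<and> i \<le> m \<and> 1 \<le> j \<and> j \<le> l i"
  unfolding B_verts_def by auto

lemma None_in_B [simp]: "None \<in> B_verts m l"
  unfolding B_verts_def by auto

lemma B_verts_eq: "B_verts m l = insert None (Some ` Sigma {1..m} (\<lambda>i. {1..l i}))"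
  unfolding B_verts_def by auto

lemma finite_B [simp]: "finite (B_verts m l)"
  unfolding B_verts_eq by auto

lemma card_B: "card (B_verts m l) = Suc (\<Sum>i=1..m. l i)"
proof -
  have "card (Some ` Sigma {1..m} (\<lambda>i. {1..l i})) = card (Sigma {1..m} (\<lambda>i. {1..l i}))"
    by (rule card_image) simp
  also have "\<dots> = (\<Sum>i=1..m. l i)" by simp
  finally show ?thesis unfolding B_verts_eq by (subst card_insert_disjoint) auto
qed

lemma B_adj_sym: "B_adj m l x y = B_adj m l y x"
  unfolding B_adj_def by blast

lemma adj_Some: "B_adj m l x (Some (i, j)) \<Longrightarrow>
   (x = None \<and> j = 1) \<or> (x = Some (i, j - 1) \<and> 2 \<le> j) \<or> x = Some (i, Suc j)"
  unfolding B_adj_def by auto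

lemma adj_None: "B_adj m l x None \<Longrightarrow> \<exists>i. x = Some (i, 1)"
  unfolding B_adj_def by auto

lemma sq_sym: "square_adj V (B_adj m l) x y \<Longrightarrow> square_adj V (B_adj m l) y x"
  unfolding square_adj_def using B_adj_sym by metis

lemma sq_irr: "\<not> square_adj V E x x"
  unfolding square_adj_def by simp

lemma sq_nbr:
  assumes "square_adj (B_verts m l) (B_adj m l) (Some (i, j)) y"
  shows "(y = None \<and> j \<le> 2) \<or> (\<exists>j'. y = Some (i, j') \<and> j' \<noteq> j \<and> j \<le> j' + 2 \<and> j' \<le> j + 2)
     \<or> (j = 1 \<and> (\<exists>i'. y = Some (i', 1)))"
proof -
  have ne: "y \<noteq> Some (i, j)" using assms unfolding square_adj_def by auto
  from assms consider "B_adj m l (Some (i, j)) y" | w where "B_adj m l (Some (i, j)) w" "B_adj m l w y"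
    unfolding square_adj_def by blast
  then show ?thesis
  proof cases
    case 1
    then have "B_adj m l y (Some (i, j))" using B_adj_sym by metis
    from adj_Some[OF this] show ?thesis using ne by auto
  next
    case 2
    then have w: "B_adj m l w (Some (i, j))" using B_adj_sym by metis
    from adj_Some[OF w] consider "w = None" "j = 1" | "w = Some (i, j - 1)" "2 \<le> j" | "w = Some (i, Suc j)"
      by blast
    then show ?thesis
    proof cases
      case 1
      then show ?thesis using adj_None[of m l y] 2(2) B_adj_sym by metis
    next
      case 2
      then have "B_adj m l y (Some (i, j - 1))" using \<open>B_adj m l w y\<close> B_adj_sym by metis
      from adj_Some[OF this] show ?thesis using ne 2 by auto
    next
      case 3
      then have "B_adj m l y (Some (i, Suc j))" using \<open>B_adj m l w y\<close> B_adj_sym by metis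
      from adj_Some[OF this] show ?thesis using ne by auto
    qed
  qed
qed

lemma B_sub: "(\<And>i. l' i \<le> l i) \<Longrightarrow> B_verts m l' \<subseteq> B_verts m l"
  unfolding B_verts_def using le_trans by fastforce

lemma sq_restrict:
  assumes le: "\<And>i. l' i \<le> l i" and x: "x \<in> B_verts m l'" and y: "y \<in> B_verts m l'"
    and a: "square_adj (B_verts m l) (B_adj m l) x y"
  shows "square_adj (B_verts m l') (B_adj m l') x y"
proof -
  have adjr: "B_adj m l' a b" if "B_adj m l a b" "a \<in> B_verts m l'" "b \<in> B_verts m l'" for a b
    using that unfolding B_adj_def by blast
  have ne: "x \<noteq> y" using a unfolding square_adj_def by auto
  from a consider "B_adj m l x y" | w where "w \<in> B_verts m l" "B_adj m l x w" "B_adj m l w y"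
    unfolding square_adj_def by blast
  then show ?thesis
  proof cases
    case 1
    then show ?thesis using adjr x y ne unfolding square_adj_def by blast
  next
    case 2
    show ?thesis
    proof (cases "w \<in> B_verts m l'")
      case True
      then show ?thesis using adjr x y ne 2 unfolding square_adj_def by blast
    next
      case False
      then obtain i j where w: "w = Some (i, j)" using None_in_B by (cases w) auto
      with False 2(1) have jl: "l' i < j" "1 \<le> i" "i \<le> m" "1 \<le> j" by auto
      have val: "z = (if j = 1 then None else Some (i, j - 1))"
        if "B_adj m l z w" "z \<in> B_verts m l'" for z
        using adj_Some[of m l z i j] that jl w by auto
      have "x = y" using val[of x] val[of y] 2 x y B_adj_sym by metis
      then show ?thesis using ne by simp
    qed
  qed
qed

lemma nbr_bounds:
  fixes m i j :: nat and l l' :: "nat \<Rightarrow> nat"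
  assumes m: "2 \<le> m" and i: "1 \<le> i" "i \<le> m" and j: "l' i < j"
  defines "d \<equiv> card {y \<in> B_verts m l'. square_adj (B_verts m l) (B_adj m l) (Some (i, j)) y}"
  shows "d \<le> m" and "1 \<le> d \<Longrightarrow> j \<le> l' i + 2" and "2 \<le> d \<Longrightarrow> j = l' i + 1"
    and "3 \<le> d \<Longrightarrow> j = 1"
proof -
  define N where "N = {y \<in> B_verts m l'. square_adj (B_verts m l) (B_adj m l) (Some (i, j)) y}"
  have dN: "d = card N" unfolding d_def N_def by simp
  have finN: "finite N" unfolding N_def by simp
  have mem: "y \<in> B_verts m l'" "(y = None \<and> j \<le> 2) \<or> (\<exists>j'. y = Some (i, j') \<and> j' \<noteq> j \<and> j \<le> j' + 2 \<and> j' \<le> j + 2)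
     \<or> (j = 1 \<and> (\<exists>i'. y = Some (i', 1)))" "y \<noteq> Some (i, j)" if "y \<in> N" for y
    using that sq_nbr unfolding N_def square_adj_def by blast+
  have b0: "N = {}" if "l' i + 3 \<le> j"
  proof -
    { fix y assume "y \<in> N"
      from mem[OF this] have False using that by auto }
    then show ?thesis by blast
  qed
  have b1: "N \<subseteq> {if j = 2 then None else Some (i, j - 2)}" if "j = l' i + 2"
  proof
    fix y assume "y \<in> N"
    from mem[OF this] show "y \<in> {if j = 2 then None else Some (i, j - 2)}" using that by auto
  qed
  have b2: "N \<subseteq> {Some (i, j - 1), if j = 2 then None else Some (i, j - 2)}" if "j = l' i + 1" "2 \<le> j"
  proof
    fix y assume "y \<in> N"
    from mem[OF this] show "y \<in> {Some (i, j - 1), if j = 2 then None else Some (i, j - 2)}" using that by auto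
  qed
  have bm: "N \<subseteq> insert None ((\<lambda>i'. Some (i', 1)) ` ({1..m} - {i}))" if "j = 1"
  proof
    fix y assume "y \<in> N"
    from mem[OF this] show "y \<in> insert None ((\<lambda>i'. Some (i', 1)) ` ({1..m} - {i}))" using that j by auto
  qed
  have c1: "card N \<le> 1" if "j = l' i + 2"
    using card_mono[OF _ b1[OF that]] by simp
  have c2: "card N \<le> 2" if "j = l' i + 1" "2 \<le> j"
  proof -
    have "card N \<le> card {Some (i, j - 1), if j = 2 then None else Some (i, j - 2)}"
      by (rule card_mono[OF _ b2[OF that]]) simp
    also have "\<dots> \<le> 2" by (rule order_trans[OF card_insert_le_m1]) auto
    finally show ?thesis .
  qed
  have cm: "card N \<le> m" if "j = 1"
  proof -
    have "card N \<le> card (insert None ((\<lambda>i'. Some (i', 1::nat)) ` ({1..m} - {i})))"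
      using bm[OF that] by (intro card_mono) auto
    also have "\<dots> \<le> Suc (card ((\<lambda>i'. Some (i', 1::nat)) ` ({1..m} - {i})))" by (rule card_insert_le_m1) auto
    also have "card ((\<lambda>i'. Some (i', 1::nat)) ` ({1..m} - {i})) \<le> card ({1..m} - {i})" by (rule card_image_le) simp
    also have "card ({1..m::nat} - {i}) = m - 1" using i by simp
    finally show ?thesis using m by simp
  qed
  have cases: "l' i + 3 \<le> j \<or> j = l' i + 2 \<or> (j = l' i + 1 \<and> 2 \<le> j) \<or> j = 1" using j by linarith
  show "d \<le> m"
  proof -
    have "card N \<le> m" if "l' i + 3 \<le> j" using b0[OF that] by simp
    moreover have "card N \<le> m" if "j = l' i + 2" using c1[OF that] m by simp
    moreover have "card N \<le> m" if "j = l' i + 1 \<and> 2 \<le> j" using c2 that m by simp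
    moreover have "card N \<le> m" if "j = 1" using cm[OF that] by simp
    ultimately show ?thesis using cases unfolding dN by blast
  qed
  have n0: "\<not> l' i + 3 \<le> j" if "1 \<le> d" using b0 that unfolding dN by auto
  have n1: "j \<noteq> l' i + 2" if "2 \<le> d" using c1 that unfolding dN by fastforce
  have n2: "\<not> (j = l' i + 1 \<and> 2 \<le> j)" if "3 \<le> d" using c2 that unfolding dN by fastforce
  show "1 \<le> d \<Longrightarrow> j \<le> l' i + 2" using n0 by linarith
  show "2 \<le> d \<Longrightarrow> j = l' i + 1" using n0 n1 cases j by fastforce
  show "3 \<le> d \<Longrightarrow> j = 1" using n0 n1 n2 cases by fastforce
qed

lemma cut_step:
  fixes m :: nat and l l' :: "nat \<Rightarrow> nat"
  assumes m: "2 \<le> m"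
    and le: "\<And>i. l' i \<le> l i"
    and I0: "card {i\<in>{1..m}. l' i = 0 \<and> 0 < l i} \<le> 1"
    and I1: "card {i\<in>{1..m}. l' i < l i} \<le> m - 1"
    and I12: "card {i\<in>{1..m}. l' i < l i} + card {i\<in>{1..m}. l' i + 2 \<le> l i} \<le> m"
    and sz: "(\<Sum>i=1..m. l i) \<le> (\<Sum>i=1..m. l' i) + (m+1)"
    and ce: "(card (B_verts m l') + m) div (m+1) + 1 \<le> (card (B_verts m l) + m) div (m+1)"
    and ih: "equitably_choosable (B_verts m l') (square_adj (B_verts m l') (B_adj m l')) (m+1)"
  shows "equitably_choosable (B_verts m l) (square_adj (B_verts m l) (B_adj m l)) (m+1)"
proof -
  define V where "V = B_verts m l"
  define V' where "V' = B_verts m l'"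
  define E where "E = square_adj V (B_adj m l)"
  have sub: "V' \<subseteq> V" unfolding V_def V'_def by (rule B_sub) (rule le)
  have VS: "V - (V - V') = V'" using sub by auto
  define d where "d x = card {y\<in>V'. E x y}" for x
  have Sform: "\<exists>i j. x = Some (i, j) \<and> 1 \<le> i \<and> i \<le> m \<and> l' i < j \<and> j \<le> l i" if "x \<in> V - V'" for x
  proof (cases x)
    case None
    then show ?thesis using that unfolding V'_def by simp
  next
    case (Some p)
    then obtain i j where "x = Some (i, j)" by (cases p) auto
    then show ?thesis using that unfolding V_def V'_def by auto
  qed
  define T0 where "T0 = (\<lambda>i. Some (i, 1::nat)) ` {i\<in>{1..m}. l' i = 0 \<and> 0 < l i}"
  define T1 where "T1 = (\<lambda>i. Some (i, Suc (l' i))) ` {i\<in>{1..m}. l' i < l i}"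
  define T2 where "T2 = (\<lambda>i. Some (i, l' i + 2)) ` {i\<in>{1..m}. l' i + 2 \<le> l i}"
  have dd: "d x \<le> m \<and> (1 \<le> d x \<longrightarrow> x \<in> T1 \<union> T2) \<and> (2 \<le> d x \<longrightarrow> x \<in> T1) \<and> (3 \<le> d x \<longrightarrow> x \<in> T0)"
    if x: "x \<in> V - V'" for x
  proof -
    obtain i j where ij: "x = Some (i, j)" "1 \<le> i" "i \<le> m" "l' i < j" "j \<le> l i" using Sform[OF x] by blast
    have dx: "d x = card {y \<in> B_verts m l'. square_adj (B_verts m l) (B_adj m l) (Some (i, j)) y}"
      unfolding d_def E_def V_def V'_def ij(1) ..
    note nb = nbr_bounds[where m=m and i=i and j=j and l=l and l'=l', OF m ij(2,3,4), folded dx]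
    have "1 \<le> d x \<longrightarrow> x \<in> T1 \<union> T2"
    proof
      assume "1 \<le> d x"
      then have "j \<le> l' i + 2" by (rule nb(2))
      then have "j = Suc (l' i) \<or> j = l' i + 2" using ij by linarith
      then show "x \<in> T1 \<union> T2" unfolding T1_def T2_def using ij by auto
    qed
    moreover have "2 \<le> d x \<longrightarrow> x \<in> T1"
    proof
      assume "2 \<le> d x"
      then have "j = l' i + 1" by (rule nb(3))
      then show "x \<in> T1" unfolding T1_def using ij by auto
    qed
    moreover have "3 \<le> d x \<longrightarrow> x \<in> T0"
    proof
      assume "3 \<le> d x"
      then have "j = 1" by (rule nb(4))
      then show "x \<in> T0" unfolding T0_def using ij by auto
    qed
    ultimately show ?thesis using nb(1) by blast
  qed
  have cT0: "card T0 \<le> 1"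
  proof -
    have "card T0 \<le> card {i\<in>{1..m}. l' i = 0 \<and> 0 < l i}" unfolding T0_def by (rule card_image_le) simp
    then show ?thesis using I0 by linarith
  qed
  have cT1: "card T1 \<le> card {i\<in>{1..m}. l' i < l i}" unfolding T1_def by (rule card_image_le) simp
  have cT2: "card T2 \<le> card {i\<in>{1..m}. l' i + 2 \<le> l i}" unfolding T2_def by (rule card_image_le) simp
  have finT: "finite T0" "finite T1" "finite T2" unfolding T0_def T1_def T2_def by simp_all
  have cS: "card (V - V') \<le> m + 1"
  proof -
    have "card (V - V') = card V - card V'" using sub by (simp add: card_Diff_subset V'_def)
    then show ?thesis unfolding V_def V'_def card_B using sz by simp
  qed
  have finS: "finite (V - V')" unfolding V_def by simp
  have hall: "card {x\<in>V - V'. t \<le> d x} + t \<le> m + 1" if tk: "t \<le> m + 1" for t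
  proof -
    consider "t = 0" | "t = 1" | "t = 2" | "3 \<le> t" "t \<le> m" | "m < t" by linarith
    then show ?thesis
    proof cases
      case 1
      have "{x\<in>V - V'. t \<le> d x} = V - V'" using 1 by auto
      then show ?thesis using cS 1 by simp
    next
      case 2
      have "card {x\<in>V - V'. t \<le> d x} \<le> card (T1 \<union> T2)"
        by (rule card_mono) (use finT dd 2 in auto)
      also have "\<dots> \<le> card T1 + card T2" by (rule card_Un_le)
      finally show ?thesis using cT1 cT2 I12 2 by linarith
    next
      case 3
      have "card {x\<in>V - V'. t \<le> d x} \<le> card T1"
        by (rule card_mono) (use finT dd 3 in auto)
      then show ?thesis using cT1 I1 3 m by linarith
    next
      case 4
      have "card {x\<in>V - V'. t \<le> d x} \<le> card T0"
        by (rule card_mono) (use finT dd 4 in auto)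
      then show ?thesis using cT0 4 by linarith
    next
      case 5
      have e: "{x\<in>V - V'. t \<le> d x} = {}" using dd 5 by fastforce
      have "card {x\<in>V - V'. t \<le> d x} = 0" unfolding e by simp
      then show ?thesis using 5 tk by linarith
    qed
  qed
  have "equitably_choosable V E (m + 1)"
  proof (rule kk_step[of V "V - V'"])
    show "finite V" unfolding V_def by simp
    show "V - V' \<subseteq> V" by blast
    show "0 < m + 1" by simp
    show "\<And>x. \<not> E x x" unfolding E_def by (rule sq_irr)
    show "\<And>x y. E x y \<Longrightarrow> E y x" unfolding E_def by (rule sq_sym)
    show "equitably_choosable (V - (V - V')) E (m + 1)" unfolding VS
      by (rule ech_mono[OF ih[folded V'_def]]) (use sq_restrict[OF le] in \<open>auto simp: E_def V_def V'_def\<close>)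
    show "(card (V - (V - V')) + (m + 1) - 1) div (m + 1) + 1 \<le> (card V + (m + 1) - 1) div (m + 1)"
      unfolding VS using ce unfolding V_def V'_def by simp
    show "\<And>t. t \<le> m + 1 \<Longrightarrow> card {x \<in> V - V'. t \<le> card {y \<in> V - (V - V'). E x y}} + t \<le> m + 1"
      unfolding VS using hall unfolding d_def by simp
  qed
  then show ?thesis unfolding E_def V_def .
qed

lemma exist_sum:
  assumes "finite I" "s \<le> (\<Sum>i\<in>I. c i)"
  shows "\<exists>\<delta>. (\<forall>i. \<delta> i \<le> (c i :: nat)) \<and> (\<Sum>i\<in>I. \<delta> i) = s"
  using assms
proof (induction I arbitrary: s rule: finite_induct)
  case empty
  then show ?case by (intro exI[of _ "\<lambda>_. 0"]) simp
next
  case (insert a I)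
  show ?case
  proof (cases "s \<le> (\<Sum>i\<in>I. c i)")
    case True
    then obtain \<delta> where d: "\<forall>i. \<delta> i \<le> c i" "(\<Sum>i\<in>I. \<delta> i) = s" using insert.IH by blast
    define \<delta>' where "\<delta>' = \<delta>(a := 0)"
    have "(\<Sum>i\<in>I. \<delta>' i) = (\<Sum>i\<in>I. \<delta> i)" unfolding \<delta>'_def using insert.hyps by (intro sum.cong) auto
    moreover have "\<forall>i. \<delta>' i \<le> c i" unfolding \<delta>'_def using d by auto
    moreover have "(\<Sum>i\<in>insert a I. \<delta>' i) = \<delta>' a + (\<Sum>i\<in>I. \<delta>' i)" using insert.hyps by simp
    moreover have "\<delta>' a = 0" unfolding \<delta>'_def by simp
    ultimately have "(\<forall>i. \<delta>' i \<le> c i) \<and> (\<Sum>i\<in>insert a I. \<delta>' i) = s" using d(2) by simp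
    then show ?thesis by blast
  next
    case False
    define \<delta> where "\<delta> = c(a := s - (\<Sum>i\<in>I. c i))"
    have "(\<Sum>i\<in>I. \<delta> i) = (\<Sum>i\<in>I. c i)" unfolding \<delta>_def using insert.hyps by (intro sum.cong) auto
    moreover have "s - (\<Sum>i\<in>I. c i) \<le> c a" using insert.prems insert.hyps by simp
    moreover have "\<forall>i. \<delta> i \<le> c i" using \<open>s - (\<Sum>i\<in>I. c i) \<le> c a\<close> unfolding \<delta>_def by auto
    moreover have "\<delta> a = s - (\<Sum>i\<in>I. c i)" unfolding \<delta>_def by simp
    moreover have "(\<Sum>i\<in>insert a I. \<delta> i) = \<delta> a + (\<Sum>i\<in>I. \<delta> i)" using insert.hyps by simp
    ultimately have "(\<forall>i. \<delta> i \<le> c i) \<and> (\<Sum>i\<in>insert a I. \<delta> i) = s" using False by simp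
    then show ?thesis by blast
  qed
qed

lemma count3:
  assumes "finite I"
  shows "card {i\<in>I. 0 < \<delta> i} + card {i\<in>I. 2 \<le> \<delta> i} + card {i\<in>I. 3 \<le> \<delta> i} \<le> (\<Sum>i\<in>I. (\<delta> i :: nat))"
proof -
  have e: "card {i\<in>I. P i} = (\<Sum>i\<in>I. if P i then 1 else 0)" for P
    using sum.inter_filter[OF assms, of "\<lambda>_. 1::nat" P] by simp
  show ?thesis
    unfolding e[of "\<lambda>i. 0 < \<delta> i"] e[of "\<lambda>i. 2 \<le> \<delta> i"] e[of "\<lambda>i. 3 \<le> \<delta> i"] sum.distrib[symmetric]
    by (rule sum_mono) auto
qed

lemma ce_arith:
  fixes N m :: nat
  assumes "m + 1 \<le> N"
  shows "(Suc (N - (N mod (m+1) + 1)) + m) div (m+1) + 1 \<le> (Suc N + m) div (m+1)"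
proof -
  define k where "k = m + 1"
  define q where "q = N div k"
  define r where "r = N mod k"
  have N: "N = q * k + r" unfolding q_def r_def by simp
  have rk: "r < k" unfolding r_def k_def by simp
  have q1: "1 \<le> q" unfolding q_def k_def using assms by (simp add: div_le_mono[of "m+1" N "m+1", simplified])
  have a: "Suc (N - (N mod (m+1) + 1)) + m = m + q * k" using N rk q1 unfolding r_def[symmetric] k_def[symmetric]
    by (cases q) (auto simp: k_def)
  have b: "Suc N + m = (r + 0) + (q + 1) * k" using N unfolding k_def by (simp add: algebra_simps)
  have "(m + q * k) div k = q + m div k" by (rule div_mult_self1) (simp add: k_def)
  moreover have "m div k = 0" unfolding k_def by simp
  ultimately have "(m + q * k) div k = q" by simp
  moreover have "(r + (q + 1) * k) div k = (q + 1) + r div k" by (rule div_mult_self1) (simp add: k_def)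
  moreover have "r div k = 0" using rk by simp
  ultimately have x: "(m + q * k) div k = q" "(r + (q + 1) * k) div k = q + 1" by simp_all
  have "(Suc (N - (N mod (m+1) + 1)) + m) div (m+1) = (m + q * k) div k" by (subst a) (simp add: k_def)
  moreover have "(Suc N + m) div (m+1) = (r + (q + 1) * k) div k" by (subst b) (simp add: k_def)
  ultimately show ?thesis using x by simp
qed

lemma delta_step:
  fixes m N :: nat and l \<delta> :: "nat \<Rightarrow> nat"
  assumes m: "3 \<le> m" and dle: "\<forall>i. \<delta> i \<le> l i"
    and N: "N = (\<Sum>i=1..m. l i)" and Nm: "m + 1 \<le> N"
    and sR: "(\<Sum>i=1..m. \<delta> i) = N mod (m+1) + 1"
    and c0: "card {i\<in>{1..m}. \<delta> i = l i \<and> 0 < l i} \<le> 1"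
    and c1: "card {i\<in>{1..m}. 0 < \<delta> i} \<le> m - 1"
    and c12: "card {i\<in>{1..m}. 0 < \<delta> i} + card {i\<in>{1..m}. 2 \<le> \<delta> i} \<le> m"
    and ih: "\<And>l'. (\<Sum>i=1..m. l' i) < N \<Longrightarrow>
       equitably_choosable (B_verts m l') (square_adj (B_verts m l') (B_adj m l')) (m+1)"
  shows "equitably_choosable (B_verts m l) (square_adj (B_verts m l) (B_adj m l)) (m+1)"
proof -
  define l' where "l' i = l i - \<delta> i" for i
  have "(\<Sum>i=1..m. l' i) = (\<Sum>i=1..m. l i) - (\<Sum>i=1..m. \<delta> i)"
    unfolding l'_def by (rule sum_subtractf_nat) (use dle in auto)
  then have sl': "(\<Sum>i=1..m. l' i) = N - (N mod (m+1) + 1)" using N sR by simp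
  have Rle: "N mod (m+1) + 1 \<le> N"
  proof -
    have "N mod (m+1) < m + 1" by simp
    then show ?thesis using Nm by linarith
  qed
  show ?thesis
  proof (rule cut_step[of m l' l])
    show "2 \<le> m" using m by simp
    show "\<And>i. l' i \<le> l i" unfolding l'_def by simp
    have "{i\<in>{1..m}. l' i = 0 \<and> 0 < l i} = {i\<in>{1..m}. \<delta> i = l i \<and> 0 < l i}"
    proof (rule Collect_cong)
      fix i have "\<delta> i \<le> l i" using dle by blast
      then show "(i \<in> {1..m} \<and> l' i = 0 \<and> 0 < l i) = (i \<in> {1..m} \<and> \<delta> i = l i \<and> 0 < l i)"
        unfolding l'_def by arith
    qed
    then show "card {i\<in>{1..m}. l' i = 0 \<and> 0 < l i} \<le> 1" using c0 by simp
    have e1: "{i\<in>{1..m}. l' i < l i} = {i\<in>{1..m}. 0 < \<delta> i}"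
    proof (rule Collect_cong)
      fix i have "\<delta> i \<le> l i" using dle by blast
      then show "(i \<in> {1..m} \<and> l' i < l i) = (i \<in> {1..m} \<and> 0 < \<delta> i)"
        unfolding l'_def by arith
    qed
    then show "card {i\<in>{1..m}. l' i < l i} \<le> m - 1" using c1 by simp
    have e2: "{i\<in>{1..m}. l' i + 2 \<le> l i} = {i\<in>{1..m}. 2 \<le> \<delta> i}"
    proof (rule Collect_cong)
      fix i have "\<delta> i \<le> l i" using dle by blast
      then show "(i \<in> {1..m} \<and> l' i + 2 \<le> l i) = (i \<in> {1..m} \<and> 2 \<le> \<delta> i)"
        unfolding l'_def by arith
    qed
    show "card {i\<in>{1..m}. l' i < l i} + card {i\<in>{1..m}. l' i + 2 \<le> l i} \<le> m"
      unfolding e1 e2 by (rule c12)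
    show "(\<Sum>i=1..m. l i) \<le> (\<Sum>i=1..m. l' i) + (m+1)" unfolding sl' N[symmetric] using Rle mod_less_divisor[of "m+1" N] by linarith
    show "(card (B_verts m l') + m) div (m+1) + 1 \<le> (card (B_verts m l) + m) div (m+1)"
      unfolding card_B sl' N[symmetric] by (rule ce_arith[OF Nm])
    show "equitably_choosable (B_verts m l') (square_adj (B_verts m l') (B_adj m l')) (m+1)"
      by (rule ih) (use sl' Rle in simp)
  qed
qed

lemma ech_empty: "equitably_choosable {} E k"
  unfolding equitably_choosable_def equitable_L_coloring_def by simp

lemma base_case:
  fixes m :: nat and l :: "nat \<Rightarrow> nat"
  assumes "(\<Sum>i=1..m. l i) \<le> m"
  shows "equitably_choosable (B_verts m l) (square_adj (B_verts m l) (B_adj m l)) (m+1)"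
proof (rule kk_step[of "B_verts m l" "B_verts m l"])
  show "finite (B_verts m l)" by simp
  show "B_verts m l \<subseteq> B_verts m l" by simp
  show "0 < m + 1" by simp
  show "\<And>x. \<not> square_adj (B_verts m l) (B_adj m l) x x" by (rule sq_irr)
  show "\<And>x y. square_adj (B_verts m l) (B_adj m l) x y \<Longrightarrow> square_adj (B_verts m l) (B_adj m l) y x"
    by (rule sq_sym)
  show "equitably_choosable (B_verts m l - B_verts m l) (square_adj (B_verts m l) (B_adj m l)) (m + 1)"
    using ech_empty by simp
  show "(card (B_verts m l - B_verts m l) + (m + 1) - 1) div (m + 1) + 1 \<le> (card (B_verts m l) + (m + 1) - 1) div (m + 1)"
  proof -
    have "(m+1) div (m+1) \<le> (card (B_verts m l) + (m + 1) - 1) div (m + 1)"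
      by (rule div_le_mono) (simp add: card_B)
    then show ?thesis by simp
  qed
  fix t :: nat assume t: "t \<le> m + 1"
  show "card {x \<in> B_verts m l. t \<le> card {y \<in> B_verts m l - B_verts m l. square_adj (B_verts m l) (B_adj m l) x y}} + t \<le> m + 1"
  proof (cases "t = 0")
    case True
    then show ?thesis using assms card_B[of m l] by simp
  next
    case False
    then have e: "{x \<in> B_verts m l. t \<le> card {y \<in> B_verts m l - B_verts m l. square_adj (B_verts m l) (B_adj m l) x y}} = {}"
      by simp
    have "card {x \<in> B_verts m l. t \<le> card {y \<in> B_verts m l - B_verts m l. square_adj (B_verts m l) (B_adj m l) x y}} = 0"
      unfolding e by simp
    then show ?thesis using t by linarith
  qed
qed

lemma sub_single_card: "A \<subseteq> {a} \<Longrightarrow> card A \<le> 1"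
  using card_mono[of "{a}" A] by simp

lemma main_gen:
  fixes m :: nat and l :: "nat \<Rightarrow> nat"
  assumes m: "3 \<le> m"
  shows "equitably_choosable (B_verts m l) (square_adj (B_verts m l) (B_adj m l)) (m+1)"
proof (induction "\<Sum>i=1..m. l i" arbitrary: l rule: less_induct)
  case less
  define N where "N = (\<Sum>i=1..m. l i)"
  define R where "R = N mod (m+1) + 1"
  have ih: "\<And>l'. (\<Sum>i=1..m. l' i) < N \<Longrightarrow>
       equitably_choosable (B_verts m l') (square_adj (B_verts m l') (B_adj m l')) (m+1)"
    using less N_def by blast
  show ?case
  proof (cases "N \<le> m")
    case True
    then show ?thesis unfolding N_def by (rule base_case)
  next
    case False
    then have Nm: "m + 1 \<le> N" by simp
    have modle: "N mod (m+1) + (m+1) \<le> N"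
    proof -
      have "N mod (m+1) = (N - (m+1)) mod (m+1)" using Nm by (rule le_mod_geq)
      moreover have "(N - (m+1)) mod (m+1) \<le> N - (m+1)" by (rule mod_less_eq_dividend)
      ultimately show ?thesis using Nm by linarith
    qed
    have RN: "R + m \<le> N" unfolding R_def using modle by simp
    have Rk: "R \<le> m + 1" unfolding R_def using mod_less_divisor[of "m+1" N] by linarith
    have sumtail: "N \<le> (\<Sum>i=1..m. l i - 1) + m"
    proof -
      have "N \<le> (\<Sum>i=1..m. (l i - 1) + 1)" unfolding N_def by (rule sum_mono) simp
      also have "\<dots> = (\<Sum>i=1..m. l i - 1) + (\<Sum>i=1..m. (1::nat))" by (rule sum.distrib)
      also have "(\<Sum>i=1..m. (1::nat)) = m" by simp
      finally show ?thesis .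
    qed
    have "\<exists>\<delta>. (\<forall>i. \<delta> i \<le> l i) \<and> (\<Sum>i=1..m. \<delta> i) = R
       \<and> card {i\<in>{1..m}. \<delta> i = l i \<and> 0 < l i} \<le> 1
       \<and> card {i\<in>{1..m}. 0 < \<delta> i} \<le> m - 1
       \<and> card {i\<in>{1..m}. 0 < \<delta> i} + card {i\<in>{1..m}. 2 \<le> \<delta> i} \<le> m"
    proof (cases "R \<le> m - 1")
      case A: True
      obtain \<delta> where d: "\<forall>i. \<delta> i \<le> l i - 1" "(\<Sum>i=1..m. \<delta> i) = R"
        using exist_sum[of "{1..m}" R "\<lambda>i. l i - 1"] sumtail RN by force
      have e0: "{i\<in>{1..m}. \<delta> i = l i \<and> 0 < l i} = {}"
      proof -
        { fix i assume "\<delta> i = l i" "0 < l i"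
          moreover have "\<delta> i \<le> l i - 1" using d(1) by blast
          ultimately have False by linarith }
        then show ?thesis by blast
      qed
      have c0: "card {i\<in>{1..m}. \<delta> i = l i \<and> 0 < l i} \<le> 1" unfolding e0 by simp
      have cnt: "card {i\<in>{1..m}. 0 < \<delta> i} + card {i\<in>{1..m}. 2 \<le> \<delta> i} + card {i\<in>{1..m}. 3 \<le> \<delta> i} \<le> R"
        using count3[of "{1..m}" \<delta>] d(2) by simp
      then have c1: "card {i\<in>{1..m}. 0 < \<delta> i} \<le> m - 1" "card {i\<in>{1..m}. 0 < \<delta> i} + card {i\<in>{1..m}. 2 \<le> \<delta> i} \<le> m"
        using A by linarith+
      have "\<forall>i. \<delta> i \<le> l i" using d(1) by (meson diff_le_self le_trans)
      then show ?thesis using d(2) c0 c1 by blast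
    next
      case notA: False
      show ?thesis
      proof (cases "\<exists>i0\<in>{1..m}. 3 \<le> l i0")
        case True
        then obtain i0 where i0: "i0 \<in> {1..m}" "3 \<le> l i0" by blast
        define c where "c i = (if i = i0 then l i - 3 else l i - 1)" for i
        have "(\<Sum>i=1..m. l i - 1) \<le> (\<Sum>i=1..m. c i + (if i = i0 then 2 else 0))"
          by (rule sum_mono) (auto simp: c_def)
        also have "\<dots> = (\<Sum>i=1..m. c i) + 2" using i0 by (simp add: sum.distrib)
        finally have "R - 3 \<le> (\<Sum>i=1..m. c i)" using sumtail RN by linarith
        then obtain \<delta>' where d: "\<forall>i. \<delta>' i \<le> c i" "(\<Sum>i=1..m. \<delta>' i) = R - 3"
          using exist_sum[of "{1..m}" "R - 3" c] by force
        define \<delta> where "\<delta> i = \<delta>' i + (if i = i0 then 3 else 0)" for i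
        have R3: "3 \<le> R" using notA m by linarith
        have sd: "(\<Sum>i=1..m. \<delta> i) = R" unfolding \<delta>_def using d(2) i0 R3 by (simp add: sum.distrib)
        have dle: "\<forall>i. \<delta> i \<le> l i"
        proof
          fix i show "\<delta> i \<le> l i" using d(1) i0 unfolding \<delta>_def c_def
            by (cases "i = i0") (auto dest: spec[of _ i])
        qed
        have "{i\<in>{1..m}. \<delta> i = l i \<and> 0 < l i} \<subseteq> {i0}"
        proof
          fix i assume i: "i \<in> {i\<in>{1..m}. \<delta> i = l i \<and> 0 < l i}"
          show "i \<in> {i0}"
          proof (rule ccontr)
            assume "i \<notin> {i0}"
            then have "\<delta> i \<le> l i - 1" using d(1) unfolding \<delta>_def c_def by (auto dest: spec[of _ i])
            then show False using i by auto
          qed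
        qed
        then have c0: "card {i\<in>{1..m}. \<delta> i = l i \<and> 0 < l i} \<le> 1"
          by (rule sub_single_card)
        have cnt: "card {i\<in>{1..m}. 0 < \<delta> i} + card {i\<in>{1..m}. 2 \<le> \<delta> i} + card {i\<in>{1..m}. 3 \<le> \<delta> i} \<le> R"
          using count3[of "{1..m}" \<delta>] sd by simp
        have p3: "1 \<le> card {i\<in>{1..m}. 3 \<le> \<delta> i}"
        proof -
          have "i0 \<in> {i\<in>{1..m}. 3 \<le> \<delta> i}" using i0 unfolding \<delta>_def by simp
          then have "{i\<in>{1..m}. 3 \<le> \<delta> i} \<noteq> {}" by blast
          then show ?thesis by (simp add: Suc_leI card_gt_0_iff)
        qed
        have p23: "card {i\<in>{1..m}. 3 \<le> \<delta> i} \<le> card {i\<in>{1..m}. 2 \<le> \<delta> i}"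
          by (rule card_mono) auto
        have c1: "card {i\<in>{1..m}. 0 < \<delta> i} \<le> m - 1" "card {i\<in>{1..m}. 0 < \<delta> i} + card {i\<in>{1..m}. 2 \<le> \<delta> i} \<le> m"
          using cnt p3 p23 Rk by linarith+
        show ?thesis using dle sd c0 c1 by blast
      next
        case False
        then have l2: "\<forall>i\<in>{1..m}. l i \<le> 2" by auto
        have "N \<le> (\<Sum>i=1..m. 2)" unfolding N_def by (rule sum_mono) (use l2 in auto)
        then have N2: "N \<le> 2 * m" by simp
        have "N mod (m+1) = N - (m+1)"
        proof -
          have "N div (m+1) = 1" using Nm N2 by (intro div_nat_eqI) auto
          then show ?thesis by (metis minus_div_mult_eq_mod mult_1)
        qed
        then have RNm: "R = N - m" unfolding R_def using Nm by simp
        then have N2m: "N = 2 * m" using notA N2 by linarith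
        have "(\<Sum>i=1..m. 2 - l i) = (\<Sum>i=1..m. 2) - (\<Sum>i=1..m. l i)"
          by (rule sum_subtractf_nat) (use l2 in auto)
        then have "(\<Sum>i=1..m. 2 - l i) = 0" using N2m unfolding N_def by simp
        then have lall: "\<forall>i\<in>{1..m}. l i = 2" using l2 by (simp add: le_antisym)
        define \<delta> :: "nat \<Rightarrow> nat" where "\<delta> i = (if i \<in> {1..m} then (if i = 1 then 1 else 0) + (if i < m then 1 else 0) else 0)" for i
        have "(\<Sum>i=1..m. \<delta> i) = (\<Sum>i=1..m. (if i = 1 then 1 else 0) + (if i < m then 1 else 0))"
          unfolding \<delta>_def by (rule sum.cong) auto
        also have "\<dots> = 1 + card {i\<in>{1..m}. i < m}"
          using m sum.inter_filter[of "{1..m}" "\<lambda>_. 1::nat" "\<lambda>i. i < m"] by (simp add: sum.distrib)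
        also have "{i\<in>{1..m}. i < m} = {1..<m}" by auto
        finally have sd: "(\<Sum>i=1..m. \<delta> i) = m" using m by simp
        have dle: "\<forall>i. \<delta> i \<le> l i" using lall unfolding \<delta>_def by auto
        have "{i\<in>{1..m}. \<delta> i = l i \<and> 0 < l i} \<subseteq> {1}" using lall m unfolding \<delta>_def by auto
        then have c0: "card {i\<in>{1..m}. \<delta> i = l i \<and> 0 < l i} \<le> 1"
          by (rule sub_single_card)
        have "{i\<in>{1..m}. 0 < \<delta> i} = {1..<m}" using m unfolding \<delta>_def by auto
        then have c1: "card {i\<in>{1..m}. 0 < \<delta> i} = m - 1" by simp
        have "{i\<in>{1..m}. 2 \<le> \<delta> i} \<subseteq> {1}" unfolding \<delta>_def by auto
        then have c2: "card {i\<in>{1..m}. 2 \<le> \<delta> i} \<le> 1"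
          by (rule sub_single_card)
        have sR: "(\<Sum>i=1..m. \<delta> i) = R" using sd RNm N2m by simp
        have c12: "card {i\<in>{1..m}. 0 < \<delta> i} + card {i\<in>{1..m}. 2 \<le> \<delta> i} \<le> m" using c1 c2 m by linarith
        show ?thesis using dle sR c0 c1 c12 by (intro exI[of _ \<delta>]) simp
      qed
    qed
    then obtain \<delta> where d: "\<forall>i. \<delta> i \<le> l i" "(\<Sum>i=1..m. \<delta> i) = R"
       "card {i\<in>{1..m}. \<delta> i = l i \<and> 0 < l i} \<le> 1"
       "card {i\<in>{1..m}. 0 < \<delta> i} \<le> m - 1"
       "card {i\<in>{1..m}. 0 < \<delta> i} + card {i\<in>{1..m}. 2 \<le> \<delta> i} \<le> m" by blast
    show ?thesis
      by (rule delta_step[OF m d(1) N_def Nm d(2)[unfolded R_def] d(3) d(4) d(5) ih])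
  qed
qed

theorem lemma2p8:
  fixes m :: nat and l :: "nat \<Rightarrow> nat"
  assumes "m \<ge> 3"
    and "\<And>i. 1 \<le> i \<Longrightarrow> i \<le> m \<Longrightarrow> l i \<ge> 1"
    and "\<And>i j. 1 \<le> i \<Longrightarrow> i \<le> j \<Longrightarrow> j \<le> m \<Longrightarrow> l i \<le> l j"
  shows "equitably_choosable (B_verts m l) (square_adj (B_verts m l) (B_adj m l)) (m + 1)"
  by (rule main_gen[OF assms(1)])

end
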